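(* Let $\pi$ be a permutation with exactly one descent that avoids both $456123$ and $356124$. Then for all permutations $\alpha\le\beta$ in the interval $[1,\pi]$ with $|\beta|-|\alpha|\ge3$, the open interval $(\alpha,\beta)$ is connected; i.e. $[1,\pi]$ has no disconnected subintervals of rank $3$ or more.
   Context: A permutation of length $n$ is an arrangement of $1,\dots,n$; $1$ denotes the permutation of length one. The permutation poset is ordered by pattern containment: $\sigma\le\pi$ if $\pi$ has a subsequence in the same relative order as $\sigma$; $\pi$ avoids $\tau$ if $\tau\not\le\pi$. A descent is an index $i$ with $\pi_i>\pi_{i+1}$. The interval $[\alpha,\beta]=\{\tau:\alpha\le\tau\le\beta\}$ has rank $|\beta|-|\alpha|$; it is disconnected if the open interval $(\alpha,\beta)=[\alpha,\beta]\setminus\{\alpha,\beta\}$ is disconnected as a poset, i.e. its comparability graph (equivalently its order complex) is disconnected. *)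

theory Defs
  imports Main
begin

definition is_perm :: "nat list \<Rightarrow> bool" where
  "is_perm xs \<longleftrightarrow> distinct xs \<and> set xs = {1..length xs}"

definition order_iso :: "nat list \<Rightarrow> nat list \<Rightarrow> bool" where
  "order_iso xs ys \<longleftrightarrow> length xs = length ys \<and>
     (\<forall>i<length xs. \<forall>j<length xs. xs ! i < xs ! j \<longleftrightarrow> ys ! i < ys ! j)"

definition contains :: "nat list \<Rightarrow> nat list \<Rightarrow> bool" (infix "\<preceq>" 50) where
  "sigma \<preceq> pi \<longleftrightarrow> (\<exists>I. I \<subseteq> {..<length pi} \<and> order_iso sigma (nths pi I))"

definition avoids :: "nat list \<Rightarrow> nat list \<Rightarrow> bool" where
  "avoids pi tau \<longleftrightarrow> \<not> (tau \<preceq> pi)"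

text \<open>Descents, with 0-based indices.\<close>
definition descents :: "nat list \<Rightarrow> nat set" where
  "descents pi = {i. Suc i < length pi \<and> pi ! i > pi ! Suc i}"

definition perm_interval :: "nat list \<Rightarrow> nat list \<Rightarrow> nat list set" where
  "perm_interval a b = {t. is_perm t \<and> a \<preceq> t \<and> t \<preceq> b}"

definition open_interval :: "nat list \<Rightarrow> nat list \<Rightarrow> nat list set" where
  "open_interval a b = perm_interval a b - {a, b}"

definition comparability :: "nat list set \<Rightarrow> (nat list \<times> nat list) set" where
  "comparability S = {(x, y). x \<in> S \<and> y \<in> S \<and> (x \<preceq> y \<or> y \<preceq> x)}"

definition poset_connected :: "nat list set \<Rightarrow> bool" where
  "poset_connected S \<longleftrightarrow> (\<forall>x\<in>S. \<forall>y\<in>S. (x, y) \<in> (comparability S)\<^sup>*)"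

end

theory Submission
  imports Defs
begin


lemma nths_conv: "nths xs A = map (nth xs) (filter (\<lambda>i. i \<in> A) [0..<length xs])"
proof (induction xs rule: rev_induct)
  case Nil show ?case by simp
next
  case (snoc x xs)
  have "map (nth (xs @ [x])) (filter (\<lambda>i. i \<in> A) [0..<length xs])
      = map (nth xs) (filter (\<lambda>i. i \<in> A) [0..<length xs])"
    by (rule map_cong) (auto simp: nth_append)
  then show ?case using snoc by (simp add: nths_append)
qed

definition emb :: "nat list \<Rightarrow> nat list \<Rightarrow> (nat \<Rightarrow> nat) \<Rightarrow> bool" where
  "emb a b g \<longleftrightarrow> (\<forall>i<length a. g i < length b) \<and> (\<forall>i j. i < j \<longrightarrow> j < length a \<longrightarrow> g i < g j)
     \<and> (\<forall>i<length a. \<forall>j<length a. a!i < a!j \<longleftrightarrow> b!(g i) < b!(g j))"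

lemma filter_mono_image:
  assumes "\<forall>i<m. g i < n" "\<forall>i j. i < j \<longrightarrow> j < m \<longrightarrow> g i < g j"
  shows "filter (\<lambda>i. i \<in> g`{..<m}) [0..<n] = map g [0..<m]"
proof (rule sorted_distinct_set_unique)
  have "sorted_wrt (<) (map g [0..<m])"
    unfolding sorted_wrt_iff_nth_less using assms by auto
  then show "sorted (map g [0..<m])" "distinct (map g [0..<m])"
    by (auto simp: strict_sorted_iff)
qed (use assms in \<open>auto intro!: sorted_wrt_filter simp: sorted_wrt_upt\<close>)

lemma emb_nths: "emb a b g \<Longrightarrow> nths b (g`{..<length a}) = map (\<lambda>i. b!(g i)) [0..<length a]"
  unfolding nths_conv emb_def by (subst filter_mono_image[of "length a" g "length b"]) auto

lemma emb_order_iso: "emb a b g \<Longrightarrow> order_iso a (nths b (g`{..<length a}))"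
  unfolding emb_nths by (auto simp: order_iso_def emb_def)

lemma order_iso_emb:
  assumes "order_iso a (nths b E)"
  shows "\<exists>g. emb a b g \<and> g`{..<length a} = E \<inter> {..<length b}"
proof -
  define L where "L = filter (\<lambda>i. i \<in> E) [0..<length b]"
  have sw: "sorted_wrt (<) L" unfolding L_def
    by (rule sorted_wrt_filter) (simp add: sorted_wrt_upt)
  have nb: "nths b E = map (nth b) L" unfolding L_def nths_conv ..
  have len: "length a = length L" using assms nb by (simp add: order_iso_def)
  have setL: "set L = E \<inter> {..<length b}" unfolding L_def by auto
  have "emb a b (nth L)"
    unfolding emb_def
  proof (intro conjI allI impI)
    fix i assume "i < length a"
    then have "L!i \<in> set L" using len by simp
    then show "L!i < length b" using setL by auto
  next
    fix i j assume "i < j" "j < length a"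
    then show "L!i < L!j" using sw len by (simp add: sorted_wrt_iff_nth_less)
  next
    fix i j assume "i < length a" "j < length a"
    then show "(a!i < a!j) = (b!(L!i) < b!(L!j))"
      using assms nb len by (simp add: order_iso_def)
  qed
  moreover have "(nth L)`{..<length a} = E \<inter> {..<length b}"
    using len setL by (auto simp: set_conv_nth)
  ultimately show ?thesis by blast
qed

lemma contains_iff: "a \<preceq> b \<longleftrightarrow> (\<exists>g. emb a b g)"
proof
  assume "a \<preceq> b"
  then obtain I where "order_iso a (nths b I)" unfolding contains_def by blast
  then show "\<exists>g. emb a b g" using order_iso_emb by blast
next
  assume "\<exists>g. emb a b g"
  then obtain g where g: "emb a b g" by blast
  then have "g`{..<length a} \<subseteq> {..<length b}" by (auto simp: emb_def)
  then show "a \<preceq> b" unfolding contains_def using emb_order_iso[OF g] by blast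
qed

lemma emb_comp: "emb a b g \<Longrightarrow> emb b c h \<Longrightarrow> emb a c (h \<circ> g)"
  unfolding emb_def by auto

lemma contains_trans: "a \<preceq> b \<Longrightarrow> b \<preceq> c \<Longrightarrow> a \<preceq> c"
  using emb_comp contains_iff by metis

lemma order_iso_sym: "order_iso a b \<Longrightarrow> order_iso b a"
  unfolding order_iso_def by auto

lemma order_iso_trans: "order_iso a b \<Longrightarrow> order_iso b c \<Longrightarrow> order_iso a c"
  unfolding order_iso_def by auto

lemma emb_iso_right: "emb a b g \<Longrightarrow> order_iso b c \<Longrightarrow> emb a c g"
  unfolding emb_def order_iso_def by auto

lemma emb_iso_left: "emb a b g \<Longrightarrow> order_iso a c \<Longrightarrow> emb c b g"
  unfolding emb_def order_iso_def by auto

lemma contains_iso_right: "a \<preceq> b \<Longrightarrow> order_iso b c \<Longrightarrow> a \<preceq> c"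
  using emb_iso_right contains_iff by metis

lemma contains_iso_left: "a \<preceq> b \<Longrightarrow> order_iso a c \<Longrightarrow> c \<preceq> b"
  using emb_iso_left contains_iff by metis

lemma emb_length: "emb a b g \<Longrightarrow> length a \<le> length b"
proof -
  assume g: "emb a b g"
  have "inj_on g {..<length a}" using g unfolding emb_def inj_on_def
    by (metis lessThan_iff nat_neq_iff)
  then have "card (g`{..<length a}) = length a" by (simp add: card_image)
  moreover have "g`{..<length a} \<subseteq> {..<length b}" using g by (auto simp: emb_def)
  ultimately show ?thesis by (metis card_lessThan card_mono finite_lessThan)
qed

lemma emb_card: "emb a b g \<Longrightarrow> card (g`{..<length a}) = length a"
proof -
  assume g: "emb a b g"
  have "inj_on g {..<length a}" using g unfolding emb_def inj_on_def
    by (metis lessThan_iff nat_neq_iff)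
  then show ?thesis by (simp add: card_image)
qed



definition std :: "nat list \<Rightarrow> nat list" where
  "std xs = map (\<lambda>x. card {y \<in> set xs. y \<le> x}) xs"

lemma cnt_less:
  fixes x y :: nat
  assumes "finite S" "y \<in> S"
  shows "x < y \<longleftrightarrow> card {z\<in>S. z \<le> x} < card {z\<in>S. z \<le> y}"
proof
  assume "x < y"
  then have s1: "{z\<in>S. z \<le> x} \<subseteq> {z\<in>S. z \<le> y}" by auto
  have "y \<in> {z\<in>S. z \<le> y}" "y \<notin> {z\<in>S. z \<le> x}" using assms \<open>x < y\<close> by auto
  then have "{z\<in>S. z \<le> x} \<subset> {z\<in>S. z \<le> y}" using s1 by blast
  then show "card {z\<in>S. z \<le> x} < card {z\<in>S. z \<le> y}"
    using assms by (intro psubset_card_mono) auto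
next
  assume "card {z\<in>S. z \<le> x} < card {z\<in>S. z \<le> y}"
  moreover have "y \<le> x \<Longrightarrow> card {z\<in>S. z \<le> y} \<le> card {z\<in>S. z \<le> x}"
    using assms by (intro card_mono) auto
  ultimately show "x < y" by linarith
qed

lemma length_std[simp]: "length (std xs) = length xs"
  by (simp add: std_def)

lemma std_iso: "order_iso xs (std xs)"
  unfolding order_iso_def std_def
proof (intro conjI allI impI)
  fix i j assume "i < length xs" "j < length xs"
  then show "(xs ! i < xs ! j) =
         (map (\<lambda>x. card {y \<in> set xs. y \<le> x}) xs ! i < map (\<lambda>x. card {y \<in> set xs. y \<le> x}) xs ! j)"
    using cnt_less[of "set xs" "xs!j" "xs!i"] by simp
qed simp

lemma iso_distinct: "order_iso xs ys \<Longrightarrow> distinct xs \<Longrightarrow> distinct ys"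
  unfolding order_iso_def distinct_conv_nth
proof (intro allI impI)
  fix i j assume h: "length xs = length ys \<and> (\<forall>i<length xs. \<forall>j<length xs. (xs ! i < xs ! j) = (ys ! i < ys ! j))"
    "\<forall>i<length xs. \<forall>j<length xs. i \<noteq> j \<longrightarrow> xs ! i \<noteq> xs ! j" "i < length ys" "j < length ys" "i \<noteq> j"
  then have "xs!i < xs!j \<or> xs!j < xs!i" by (metis nat_neq_iff)
  then show "ys ! i \<noteq> ys ! j" using h by auto
qed

lemma std_perm:
  assumes "distinct xs"
  shows "is_perm (std xs)"
proof -
  have d: "distinct (std xs)" using iso_distinct[OF std_iso assms] .
  have cs: "card (set xs) = length xs" using assms by (simp add: distinct_card)
  have sub: "set (std xs) \<subseteq> {1..length xs}"
  proof
    fix v assume "v \<in> set (std xs)"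
    then obtain x where x: "x \<in> set xs" "v = card {y \<in> set xs. y \<le> x}"
      by (auto simp: std_def)
    have "1 \<le> v"
    proof -
      have "{y \<in> set xs. y \<le> x} \<noteq> {}" using x by auto
      then show ?thesis using x by (simp add: Suc_le_eq card_gt_0_iff)
    qed
    moreover have "v \<le> length xs" using x cs
      by (metis (no_types, lifting) card_mono finite_set mem_Collect_eq subsetI)
    ultimately show "v \<in> {1..length xs}" by simp
  qed
  have "card (set (std xs)) = length xs" using d by (simp add: distinct_card)
  then have "set (std xs) = {1..length xs}"
    using sub by (intro card_subset_eq) auto
  then show ?thesis using d by (simp add: is_perm_def)
qed

lemma perm_std: "is_perm a \<Longrightarrow> std a = a"
proof -
  assume p: "is_perm a"
  have "\<And>x. x \<in> set a \<Longrightarrow> card {y \<in> set a. y \<le> x} = x"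
  proof -
    fix x assume "x \<in> set a"
    then have "{y \<in> set a. y \<le> x} = {1..x}" using p by (auto simp: is_perm_def)
    then show "card {y \<in> set a. y \<le> x} = x" by simp
  qed
  then show ?thesis unfolding std_def by (simp add: map_idI)
qed

lemma std_nth_card:
  assumes "distinct xs" "i < length xs"
  shows "std xs ! i = card {j. j < length xs \<and> xs!j \<le> xs!i}"
proof -
  have "{y \<in> set xs. y \<le> xs!i} = nth xs ` {j. j < length xs \<and> xs!j \<le> xs!i}"
    by (auto simp: in_set_conv_nth)
  moreover have "inj_on (nth xs) {j. j < length xs \<and> xs!j \<le> xs!i}"
    using assms by (auto simp: inj_on_def nth_eq_iff_index_eq)
  ultimately show ?thesis using assms by (simp add: std_def card_image)
qed

lemma iso_std_eq:
  assumes "order_iso xs ys" "distinct xs"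
  shows "std xs = std ys"
proof -
  have dy: "distinct ys" using iso_distinct assms by blast
  have l: "length xs = length ys" using assms by (simp add: order_iso_def)
  show ?thesis
  proof (rule nth_equalityI)
    fix i assume i: "i < length (std xs)"
    have "{j. j < length xs \<and> xs!j \<le> xs!i} = {j. j < length ys \<and> ys!j \<le> ys!i}"
      using assms(1) i l unfolding order_iso_def by (auto simp: not_less[symmetric])
    then show "std xs ! i = std ys ! i"
      using std_nth_card[OF assms(2)] std_nth_card[OF dy] i l by simp
  qed (simp add: l)
qed

lemma perm_iso_eq: "is_perm a \<Longrightarrow> is_perm b \<Longrightarrow> order_iso a b \<Longrightarrow> a = b"
  by (metis iso_std_eq perm_std is_perm_def)

lemma nths_restrict: "nths xs (A \<inter> {..<length xs}) = nths xs A"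
  unfolding nths_conv by (rule arg_cong[where f="map (nth xs)"], rule filter_cong) auto

lemma rank_less:
  fixes i i2 :: nat
  assumes "i \<in> T" "i < i2"
  shows "card {i'\<in>T. i' < i} < card {i'\<in>T. i' < i2}"
proof (rule psubset_card_mono)
  show "finite {i' \<in> T. i' < i2}" by (rule finite_subset[of _ "{..<i2}"]) auto
  have "i \<in> {i'\<in>T. i' < i2}" "i \<notin> {i'\<in>T. i' < i}" using assms by auto
  moreover have "{i'\<in>T. i' < i} \<subseteq> {i'\<in>T. i' < i2}" using assms by auto
  ultimately show "{i' \<in> T. i' < i} \<subset> {i' \<in> T. i' < i2}" by blast
qed

lemma rank_inj: "(i::nat) \<in> T \<Longrightarrow> i2 \<in> T \<Longrightarrow> card {i'\<in>T. i' < i} = card {i'\<in>T. i' < i2} \<Longrightarrow> i = i2"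
proof -
  assume h: "i \<in> T" "i2 \<in> T" "card {i'\<in>T. i' < i} = card {i'\<in>T. i' < i2}"
  show "i = i2"
  proof (rule ccontr)
    assume "i \<noteq> i2"
    then have "i < i2 \<or> i2 < i" by auto
    then show False using rank_less[OF h(1)] rank_less[OF h(2)] h(3) by fastforce
  qed
qed

lemma nths_sub_contains:
  assumes "E \<subseteq> T"
  shows "nths b E \<preceq> nths b T"
proof -
  define J where "J = (\<lambda>i. card {i'\<in>T. i' < i}) ` E"
  have "{i\<in>T. \<exists>j\<in>J. card {i'\<in>T. i' < i} = j} = E"
    using assms rank_inj unfolding J_def by blast
  then have "nths (nths b T) J = nths b E" by (simp add: nths_nths)
  then have "nths (nths b T) (J \<inter> {..<length (nths b T)}) = nths b E"
    by (simp add: nths_restrict)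
  then show ?thesis unfolding contains_def
    by (metis inf_le2 order_iso_def)
qed

lemma contains_std_sub:
  assumes "order_iso x (nths b E)" "E \<subseteq> T"
  shows "x \<preceq> std (nths b T)"
proof -
  have "nths b E \<preceq> nths b T" using nths_sub_contains assms(2) .
  then have "x \<preceq> nths b T" using contains_iso_left order_iso_sym assms(1) by blast
  then show ?thesis using contains_iso_right std_iso by blast
qed

lemma std_contains: "std (nths b T) \<preceq> b"
  unfolding contains_def
  by (metis inf_le2 nths_restrict order_iso_sym std_iso)

lemma length_nths_sub: "T \<subseteq> {..<length b} \<Longrightarrow> length (nths b T) = card T"
proof -
  assume "T \<subseteq> {..<length b}"
  then have "{i. i < length b \<and> i \<in> T} = T" by auto
  then show ?thesis by (simp add: length_nths)
qed

lemma desc_between: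
  "i < j \<Longrightarrow> j < length (xs::nat list) \<Longrightarrow> xs!i > xs!j \<Longrightarrow> \<exists>r. i \<le> r \<and> r < j \<and> xs!r > xs!(Suc r)"
proof (induction j)
  case 0 then show ?case by simp
next
  case (Suc j)
  show ?case
  proof (cases "xs!j > xs!(Suc j)")
    case True
    have "i \<le> j" using Suc.prems by simp
    then show ?thesis using True by (intro exI[of _ j]) simp
  next
    case False
    then have "i < j" using Suc by (metis less_SucE)
    have "xs!j \<le> xs!(Suc j)" using False by simp
    then have "xs!i > xs!j" using Suc.prems by simp
    then obtain r where "i \<le> r" "r < j" "xs!r > xs!(Suc r)" using Suc.IH \<open>i < j\<close> Suc.prems by auto
    then show ?thesis by auto
  qed
qed



locale core =
  fixes a b :: "nat list" and k :: nat
  assumes pa: "is_perm a" and pb: "is_perm b" and kn: "k \<le> length b"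
    and inc: "\<And>p q. p < q \<Longrightarrow> q < length b \<Longrightarrow> q < k \<or> k \<le> p \<Longrightarrow> b!p < b!q"
    and len3: "length a + 3 \<le> length b"
    and av1: "\<not> [4,5,6,1,2,3] \<preceq> b" and av2: "\<not> [3,5,6,1,2,4] \<preceq> b"
begin

abbreviation "n \<equiv> length b"
abbreviation "m \<equiv> length a"

definition "Rg g = g ` {..<m}"

definition "R = {(i,j). \<exists>g. emb a b g \<and> i < n \<and> j < n \<and> i \<notin> Rg g \<and> j \<notin> Rg g}"

definition "Conn g g' \<longleftrightarrow> (\<forall>i j. i < n \<longrightarrow> j < n \<longrightarrow> i \<notin> Rg g \<longrightarrow> j \<notin> Rg g' \<longrightarrow> (i,j) \<in> R\<^sup>*)"

lemma db: "distinct b" using pb by (simp add: is_perm_def)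
lemma da: "distinct a" using pa by (simp add: is_perm_def)

lemma binj: "p < n \<Longrightarrow> q < n \<Longrightarrow> b!p = b!q \<Longrightarrow> p = q"
  using db by (simp add: nth_eq_iff_index_eq)

lemma run_mono:
  assumes "p < n" "q < n" "p < k \<longleftrightarrow> q < k"
  shows "p < q \<longleftrightarrow> b!p < b!q"
proof
  assume "p < q" then show "b!p < b!q" using inc assms by auto
next
  assume h: "b!p < b!q"
  show "p < q"
  proof (rule ccontr)
    assume "\<not> p < q"
    then have "q < p \<or> q = p" by auto
    then show False
    proof
      assume "q < p" then have "b!q < b!p" using inc assms by auto
      then show False using h by simp
    qed (use h in simp)
  qed
qed

lemma R_sym: "(i,j) \<in> R \<Longrightarrow> (j,i) \<in> R"
  unfolding R_def by blast

lemma Rs_sym: "(i,j) \<in> R\<^sup>* \<Longrightarrow> (j,i) \<in> R\<^sup>*"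
proof (induction rule: rtrancl_induct)
  case base then show ?case by simp
next
  case (step y z)
  then have "(z,y) \<in> R" using R_sym by blast
  then show ?case using step by (meson converse_rtrancl_into_rtrancl)
qed

lemma emb_Rg_card: "emb a b g \<Longrightarrow> card (Rg g) = m"
  unfolding Rg_def using emb_card by blast

lemma emb_Rg_sub: "emb a b g \<Longrightarrow> Rg g \<subseteq> {..<n}"
  unfolding Rg_def emb_def by auto

lemma exists_outside:
  assumes "A \<subseteq> {..<n}" "card A < n"
  shows "\<exists>z. z < n \<and> z \<notin> A"
proof (rule ccontr)
  assume "\<not> ?thesis"
  then have "{..<n} \<subseteq> A" by auto
  then have "n \<le> card A" using assms by (metis card_lessThan card_mono finite_lessThan finite_subset)
  then show False using assms by simp
qed

lemma R_I: "emb a b g \<Longrightarrow> i < n \<Longrightarrow> j < n \<Longrightarrow> i \<notin> Rg g \<Longrightarrow> j \<notin> Rg g \<Longrightarrow> (i,j) \<in> R"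
  unfolding R_def by blast

lemma conn_small:
  assumes "emb a b g" "emb a b g'" "card (Rg g \<union> Rg g') < n"
  shows "Conn g g'"
proof -
  have "Rg g \<union> Rg g' \<subseteq> {..<n}" using emb_Rg_sub assms by auto
  then obtain z where z: "z < n" "z \<notin> Rg g \<union> Rg g'" using exists_outside assms(3) by blast
  show ?thesis unfolding Conn_def
  proof (intro allI impI)
    fix i j assume "i < n" "j < n" "i \<notin> Rg g" "j \<notin> Rg g'"
    then have "(i,z) \<in> R" "(z,j) \<in> R" using z assms R_I by auto
    then show "(i,j) \<in> R\<^sup>*" by auto
  qed
qed

lemma conn_trans:
  assumes "Conn g g''" "Conn g'' g'" "emb a b g''"
  shows "Conn g g'"
proof -
  have "card (Rg g'') < n" using emb_Rg_card assms len3 by simp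
  then obtain z where z: "z < n" "z \<notin> Rg g''" using exists_outside emb_Rg_sub assms by blast
  show ?thesis unfolding Conn_def
  proof (intro allI impI)
    fix i j assume "i < n" "j < n" "i \<notin> Rg g" "j \<notin> Rg g'"
    then have "(i,z) \<in> R\<^sup>*" "(z,j) \<in> R\<^sup>*" using z assms unfolding Conn_def by auto
    then show "(i,j) \<in> R\<^sup>*" by auto
  qed
qed

definition "cpt g g' \<longleftrightarrow> (\<forall>j<m. g j < k \<longleftrightarrow> g' j < k)"

lemma exch_step:
  assumes g: "emb a b g" and g': "emb a b g'" and c: "cpt g g'"
    and j0: "j0 < m" "g j0 \<noteq> g' j0"
    and minl: "\<And>l. l < m \<Longrightarrow> g l \<noteq> g' l \<Longrightarrow> min (b!(g j0)) (b!(g' j0)) \<le> min (b!(g l)) (b!(g' l))"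
    and lt: "b!(g' j0) < b!(g j0)"
  shows "emb a b (g(j0 := g' j0))" "cpt (g(j0 := g' j0)) g'"
proof -
  define x where "x = g j0"
  define y where "y = g' j0"
  have gn: "\<And>l. l < m \<Longrightarrow> g l < n" and gm: "\<And>i j. i < j \<Longrightarrow> j < m \<Longrightarrow> g i < g j"
    and gv: "\<And>i j. i < m \<Longrightarrow> j < m \<Longrightarrow> a!i < a!j \<longleftrightarrow> b!(g i) < b!(g j)"
    using g unfolding emb_def by auto
  have g'n: "\<And>l. l < m \<Longrightarrow> g' l < n" and g'v: "\<And>i j. i < m \<Longrightarrow> j < m \<Longrightarrow> a!i < a!j \<longleftrightarrow> b!(g' i) < b!(g' j)"
    using g' unfolding emb_def by auto
  have xn: "x < n" and yn: "y < n" using gn g'n j0 x_def y_def by auto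
  have sr: "x < k \<longleftrightarrow> y < k" using c j0 unfolding cpt_def x_def y_def by auto
  have yx: "b!y < b!x" using lt x_def y_def by simp
  have ginj: "\<And>l. l < m \<Longrightarrow> l \<noteq> j0 \<Longrightarrow> g l \<noteq> x"
    using gm j0 unfolding x_def by (metis nat_neq_iff)
  have KEY: "\<And>l. l < m \<Longrightarrow> l \<noteq> j0 \<Longrightarrow> b!(g l) < b!x \<Longrightarrow> b!(g l) < b!y"
  proof (rule ccontr)
    fix l assume l: "l < m" "l \<noteq> j0" "b!(g l) < b!x" "\<not> b!(g l) < b!y"
    have "a!l < a!j0" using gv[OF l(1) j0(1)] l(3) x_def by simp
    then have "b!(g' l) < b!y" using g'v[OF l(1) j0(1)] y_def by simp
    then have ne: "g l \<noteq> g' l" using l(4) by auto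
    have "min (b!(g j0)) (b!(g' j0)) = b!y" using yx x_def y_def by simp
    then have "b!y \<le> b!(g' l)" using minl[OF l(1) ne] by simp
    then show False using \<open>b!(g' l) < b!y\<close> by simp
  qed
  have bx_ne: "\<And>l. l < m \<Longrightarrow> l \<noteq> j0 \<Longrightarrow> b!(g l) \<noteq> b!x"
    using binj gn xn ginj by metis
  have claim1: "\<And>l. l < m \<Longrightarrow> l \<noteq> j0 \<Longrightarrow> b!x < b!(g l) \<longleftrightarrow> b!y < b!(g l)"
  proof
    fix l assume l: "l < m" "l \<noteq> j0"
    { assume "b!x < b!(g l)" then show "b!y < b!(g l)" using yx by simp }
    { assume h: "b!y < b!(g l)"
      show "b!x < b!(g l)"
      proof (rule ccontr)
        assume "\<not> b!x < b!(g l)"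
        then have "b!(g l) < b!x" using bx_ne[OF l] by simp
        then show False using KEY[OF l] h by simp
      qed }
  qed
  have claim2: "\<And>l. l < m \<Longrightarrow> l \<noteq> j0 \<Longrightarrow> b!(g l) < b!x \<longleftrightarrow> b!(g l) < b!y"
    using KEY yx by auto
  show "emb a b (g(j0 := g' j0))"
    unfolding emb_def
  proof (intro conjI allI impI)
    fix i assume "i < m" then show "(g(j0 := g' j0)) i < n" using gn y_def yn by simp
  next
    fix i j assume ij: "i < j" "j < m"
    show "(g(j0 := g' j0)) i < (g(j0 := g' j0)) j"
    proof (cases "i = j0")
      case True
      then have jne: "j \<noteq> j0" using ij by simp
      have xj: "x < g j" using gm ij True x_def by simp
      have "y < g j"
      proof (cases "g j < k \<longleftrightarrow> x < k")
        case True
        then have "b!x < b!(g j)" using run_mono xn gn ij xj by auto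
        then have "b!y < b!(g j)" using yx by simp
        then show ?thesis using run_mono[OF yn gn[OF ij(2)]] True sr by auto
      next
        case False
        then have "x < k" "k \<le> g j" using xj by auto
        then show ?thesis using sr by simp
      qed
      then show ?thesis using True jne y_def by simp
    next
      case False
      show ?thesis
      proof (cases "j = j0")
        case True
        have ix: "g i < x" using gm ij True x_def by simp
        have "g i < y"
        proof (cases "g i < k \<longleftrightarrow> x < k")
          case True
          then have "b!(g i) < b!x" using run_mono xn gn ij ix by auto
          then have "b!(g i) < b!y" using KEY ij False \<open>j = j0\<close> by auto
          then show ?thesis using run_mono[OF gn yn] ij True sr by auto
        next
          case False
          then have "g i < k" "k \<le> x" using ix by auto
          then show ?thesis using sr by simp
        qed
        then show ?thesis using False True y_def by simp
      next
        case False2: False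
        then show ?thesis using False gm ij by simp
      qed
    qed
  next
    fix i j assume ij: "i < m" "j < m"
    show "(a!i < a!j) = (b!((g(j0 := g' j0)) i) < b!((g(j0 := g' j0)) j))"
    proof (cases "i = j0")
      case True
      show ?thesis
      proof (cases "j = j0")
        case True then show ?thesis using \<open>i = j0\<close> by simp
      next
        case False
        then show ?thesis using True gv[OF ij] claim1[OF ij(2) False] x_def y_def by simp
      qed
    next
      case False
      show ?thesis
      proof (cases "j = j0")
        case True
        then show ?thesis using False gv[OF ij] claim2[OF ij(1) False] x_def y_def by simp
      next
        case False2: False
        then show ?thesis using False gv[OF ij] by simp
      qed
    qed
  qed
  show "cpt (g(j0 := g' j0)) g'" using c unfolding cpt_def by simp
qed

lemma Conn_sym: "Conn g g' \<Longrightarrow> Conn g' g"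
  unfolding Conn_def using Rs_sym by blast

lemma conn_exch_one:
  assumes "emb a b g" "emb a b (g(j0 := v))" "j0 < m"
  shows "Conn g (g(j0 := v))"
proof (rule conn_small[OF assms(1,2)])
  have "Rg (g(j0 := v)) \<subseteq> insert v (Rg g)" unfolding Rg_def by auto
  then have "Rg g \<union> Rg (g(j0 := v)) \<subseteq> insert v (Rg g)" by auto
  then have "card (Rg g \<union> Rg (g(j0 := v))) \<le> card (insert v (Rg g))"
    by (intro card_mono) (auto simp: Rg_def)
  also have "\<dots> \<le> Suc m" using emb_Rg_card[OF assms(1)] by (simp add: card_insert_if Rg_def)
  finally show "card (Rg g \<union> Rg (g(j0 := v))) < n" using len3 by simp
qed

lemma exch_conn:
  "emb a b g \<Longrightarrow> emb a b g' \<Longrightarrow> cpt g g' \<Longrightarrow> card {j. j < m \<and> g j \<noteq> g' j} = N \<Longrightarrow> Conn g g'"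
proof (induction N arbitrary: g g')
  case 0
  then have "{j. j < m \<and> g j \<noteq> g' j} = {}" by simp
  then have "Rg g = Rg g'" unfolding Rg_def by (auto simp: image_def)
  then show ?case unfolding Conn_def using R_I 0 by (metis r_into_rtrancl)
next
  case (Suc N)
  define D where "D = {j. j < m \<and> g j \<noteq> g' j}"
  define f where "f j = min (b!(g j)) (b!(g' j))" for j
  have cD: "card D = Suc N" using Suc.prems D_def by simp
  have fD: "finite D" "D \<noteq> {}" using cD card_gt_0_iff[of D] by auto
  obtain j0 where j0: "j0 \<in> D" "f j0 = Min (f ` D)" using fD
    by (metis (mono_tags, lifting) Min_in finite_imageI image_iff image_is_empty)
  have minl: "\<And>l. l < m \<Longrightarrow> g l \<noteq> g' l \<Longrightarrow> f j0 \<le> f l"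
    using j0 fD D_def by auto
  have j0m: "j0 < m" "g j0 \<noteq> g' j0" using j0 D_def by auto
  have gn: "g j0 < n" "g' j0 < n" using Suc.prems(1,2) j0m unfolding emb_def by auto
  have ne: "b!(g j0) \<noteq> b!(g' j0)" using binj gn j0m by metis
  show ?case
  proof (cases "b!(g' j0) < b!(g j0)")
    case True
    let ?h = "g(j0 := g' j0)"
    have h: "emb a b ?h" "cpt ?h g'"
      using exch_step[OF Suc.prems(1,2,3) j0m _ True] minl f_def by auto
    have "{j. j < m \<and> ?h j \<noteq> g' j} = D - {j0}" unfolding D_def by auto
    then have "card {j. j < m \<and> ?h j \<noteq> g' j} = N" using Suc.prems j0 fD D_def by simp
    then have "Conn ?h g'" using Suc.IH h Suc.prems by blast
    moreover have "Conn g ?h" using conn_exch_one Suc.prems h j0m by blast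
    ultimately show ?thesis using conn_trans h by blast
  next
    case False
    then have lt: "b!(g j0) < b!(g' j0)" using ne by simp
    let ?h = "g'(j0 := g j0)"
    have c': "cpt g' g" using Suc.prems(3) unfolding cpt_def by auto
    have h: "emb a b ?h" "cpt ?h g"
      using exch_step[OF Suc.prems(2,1) c' j0m(1) _ _ lt] j0m minl f_def by (auto simp: min.commute)
    have "{j. j < m \<and> g j \<noteq> ?h j} = D - {j0}" unfolding D_def by auto
    then have "card {j. j < m \<and> g j \<noteq> ?h j} = N" using Suc.prems j0 fD D_def by simp
    moreover have "cpt g ?h" using h(2) unfolding cpt_def by auto
    ultimately have "Conn g ?h" using Suc.IH h Suc.prems by blast
    moreover have "Conn ?h g'" using conn_exch_one Suc.prems h j0m Conn_sym by blast
    ultimately show ?thesis using conn_trans h by blast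
  qed
qed

end


lemma all6: "(\<forall>i<(6::nat). P i) \<longleftrightarrow> P 0 \<and> P 1 \<and> P 2 \<and> P 3 \<and> P 4 \<and> P 5"
proof
  assume "\<forall>i<(6::nat). P i" then show "P 0 \<and> P 1 \<and> P 2 \<and> P 3 \<and> P 4 \<and> P 5" by simp
next
  assume h: "P 0 \<and> P 1 \<and> P 2 \<and> P 3 \<and> P 4 \<and> P 5"
  show "\<forall>i<(6::nat). P i"
  proof (intro allI impI)
    fix i :: nat assume "i < 6"
    then have "i = 0 \<or> i = 1 \<or> i = 2 \<or> i = 3 \<or> i = 4 \<or> i = 5" by auto
    then show "P i" using h by auto
  qed
qed

lemma three_elems:
  fixes S :: "nat set"
  assumes "finite S" "3 \<le> card S"
  shows "\<exists>x y z. x \<in> S \<and> y \<in> S \<and> z \<in> S \<and> x < y \<and> y < z"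
proof -
  define L where "L = sorted_list_of_set S"
  have sw: "sorted_wrt (<) L" unfolding L_def by (rule strict_sorted_list_of_set)
  have len: "length L = card S" unfolding L_def by simp
  have st: "set L = S" unfolding L_def using assms by simp
  have l3: "0 < length L" "1 < length L" "2 < length L" using len assms(2) by auto
  have "L!0 \<in> S" "L!1 \<in> S" "L!2 \<in> S" using st nth_mem l3 by blast+
  moreover have "L!0 < L!1" "L!1 < L!2" using sw len assms(2) by (auto simp: sorted_wrt_iff_nth_less)
  ultimately show ?thesis by blast
qed

lemma two_elems:
  fixes S :: "nat set"
  assumes "finite S" "2 \<le> card S"
  shows "\<exists>x y. x \<in> S \<and> y \<in> S \<and> x < y"
proof -
  define L where "L = sorted_list_of_set S"
  have sw: "sorted_wrt (<) L" unfolding L_def by (rule strict_sorted_list_of_set)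
  have len: "length L = card S" unfolding L_def by simp
  have st: "set L = S" unfolding L_def using assms by simp
  have l2: "0 < length L" "1 < length L" using len assms(2) by auto
  have "L!0 \<in> S" "L!1 \<in> S" using st nth_mem l2 by blast+
  moreover have "L!0 < L!1" using sw len assms(2) by (auto simp: sorted_wrt_iff_nth_less)
  ultimately show ?thesis by blast
qed

context core begin

lemma pat:
  assumes "length \<rho> = 6" "length P = 6" "sorted_wrt (<) P" "\<forall>p\<in>set P. p < n"
    "\<forall>i<6. \<forall>j<6. \<rho>!i < \<rho>!j \<longleftrightarrow> b!(P!i) < b!(P!j)"
  shows "\<rho> \<preceq> b"
proof -
  have "emb \<rho> b (nth P)" unfolding emb_def
    using assms by (auto simp: sorted_wrt_iff_nth_less)
  then show ?thesis using contains_iff by blast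
qed

definition "pos v = (SOME p. p < n \<and> b!p = v)"

lemma bvals: "p < n \<Longrightarrow> 1 \<le> b!p \<and> b!p \<le> n"
  using pb unfolding is_perm_def by (metis atLeastAtMost_iff nth_mem)

lemma pos_prop: "1 \<le> v \<Longrightarrow> v \<le> n \<Longrightarrow> pos v < n \<and> b!(pos v) = v"
proof -
  assume "1 \<le> v" "v \<le> n"
  then have "v \<in> set b" using pb unfolding is_perm_def by auto
  then have "\<exists>p. p < n \<and> b!p = v" by (simp add: in_set_conv_nth)
  then show ?thesis unfolding pos_def by (rule someI_ex)
qed

lemma pos_b: "p < n \<Longrightarrow> pos (b!p) = p"
  using pos_prop bvals binj by metis

definition "A v \<longleftrightarrow> pos v < k"

lemma A_b: "p < n \<Longrightarrow> A (b!p) \<longleftrightarrow> p < k"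
  unfolding A_def using pos_b by simp

definition "XV e = {v. 1 \<le> v \<and> v \<le> n \<and> ((\<not> A v \<and> v \<le> e) \<or> (A v \<and> e < v))}"
definition "X e = {p. p < n \<and> b!p \<in> XV e}"

lemma X_mem: "p \<in> X e \<longleftrightarrow> p < n \<and> ((k \<le> p \<and> b!p \<le> e) \<or> (p < k \<and> e < b!p))"
  unfolding X_def XV_def using A_b bvals by auto

lemma X_sub: "X e \<subseteq> {..<n}" unfolding X_def by auto

lemma card_X: "card (X e) = card (XV e)"
proof -
  have "inj_on (nth b) (X e)" using binj unfolding X_def inj_on_def by auto
  moreover have "nth b ` X e = XV e"
  proof
    show "nth b ` X e \<subseteq> XV e" unfolding X_def by auto
    show "XV e \<subseteq> nth b ` X e"
    proof
      fix v assume v: "v \<in> XV e"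
      then have "pos v < n" "b!(pos v) = v" using pos_prop unfolding XV_def by auto
      then show "v \<in> nth b ` X e" using v unfolding X_def by force
    qed
  qed
  ultimately show ?thesis by (metis card_image)
qed

lemma pos_X: "v \<in> XV e \<Longrightarrow> pos v \<in> X e"
  using pos_prop unfolding X_def XV_def by auto

definition "Pset E \<longleftrightarrow> E \<subseteq> {..<n} \<and> card E = m \<and> (\<forall>p\<in>E. \<forall>q\<in>E. p < q \<longrightarrow> b!p < b!q)"

lemma X_Pset:
  assumes "E \<subseteq> {..<n}" "card E = m" "E \<inter> X t = {}"
  shows "Pset E"
  unfolding Pset_def
proof (intro conjI ballI impI assms(1,2))
  fix p q assume pq: "p \<in> E" "q \<in> E" "p < q"
  have pn: "p < n" "q < n" using pq assms by auto
  have "p \<notin> X t" "q \<notin> X t" using pq assms by auto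
  then have np: "\<not> (k \<le> p \<and> b!p \<le> t) \<and> \<not> (p < k \<and> t < b!p)"
    and nq: "\<not> (k \<le> q \<and> b!q \<le> t) \<and> \<not> (q < k \<and> t < b!q)" using X_mem pn by auto
  show "b!p < b!q"
  proof (cases "q < k \<or> k \<le> p")
    case True then show ?thesis using inc pq pn by auto
  next
    case False
    then show ?thesis using np nq by auto
  qed
qed

lemma Pset_X:
  assumes "Pset E"
  shows "\<exists>t. t \<le> n \<and> E \<inter> X t = {}"
proof -
  define M where "M = insert 0 ((nth b) ` {p\<in>E. p < k})"
  have fM: "finite M" using assms unfolding M_def Pset_def by (auto intro: finite_subset[of _ "{..<n}"])
  define t where "t = Max M"
  have En: "E \<subseteq> {..<n}" using assms unfolding Pset_def by auto
  have "t \<in> M" unfolding t_def using fM M_def by (intro Max_in) auto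
  then have tn: "t \<le> n" using bvals En unfolding M_def by auto
  have "E \<inter> X t = {}"
  proof (rule ccontr)
    assume "E \<inter> X t \<noteq> {}"
    then obtain p where p: "p \<in> E" "p \<in> X t" by auto
    have pn: "p < n" using p En by auto
    show False
    proof (cases "p < k")
      case True
      then have "b!p \<in> M" using p unfolding M_def by auto
      then have "b!p \<le> t" unfolding t_def using fM by simp
      then show False using p(2) X_mem True by auto
    next
      case False
      have "\<forall>x\<in>M. x < b!p"
      proof
        fix x assume "x \<in> M"
        then have "x = 0 \<or> (\<exists>q\<in>E. q < k \<and> x = b!q)" unfolding M_def by auto
        then show "x < b!p"
        proof
          assume "x = 0" then show ?thesis using bvals pn by fastforce
        next
          assume "\<exists>q\<in>E. q < k \<and> x = b!q"
          then obtain q where "q \<in> E" "q < k" "x = b!q" by auto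
          then show ?thesis using assms p False unfolding Pset_def by auto
        qed
      qed
      then have "t < b!p" unfolding t_def using fM M_def by simp
      then show False using p(2) X_mem False by auto
    qed
  qed
  then show ?thesis using tn by blast
qed

end

locale score = core +
  assumes srt: "\<And>j. Suc j < length a \<Longrightarrow> \<not> a!(Suc j) < a!j"
begin

lemma asort_lt:
  assumes ij: "i < j" "j < m"
  shows "a!i < a!j"
proof (rule ccontr)
  assume "\<not> a!i < a!j"
  moreover have "a!i \<noteq> a!j" using da ij by (simp add: nth_eq_iff_index_eq)
  ultimately have "a!i > a!j" by simp
  then obtain r where "i \<le> r" "r < j" "a!r > a!(Suc r)" using desc_between[OF ij(1)] ij by blast
  then show False using srt[of r] ij by simp
qed

lemma asort:
  assumes "i < m" "j < m"
  shows "a!i < a!j \<longleftrightarrow> i < j"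
proof
  assume h: "a!i < a!j"
  show "i < j"
  proof (rule ccontr)
    assume "\<not> i < j"
    then have "j < i \<or> j = i" by auto
    then show False using asort_lt[of j i] h assms by auto
  qed
qed (use asort_lt assms in auto)

lemma emb_Pset: "emb a b g \<Longrightarrow> Pset (Rg g)"
  unfolding Pset_def
proof (intro conjI ballI impI)
  assume g: "emb a b g"
  show "Rg g \<subseteq> {..<n}" "card (Rg g) = m" using emb_Rg_sub emb_Rg_card g by auto
  fix p q assume "p \<in> Rg g" "q \<in> Rg g" "p < q"
  then obtain i j where ij: "i < m" "j < m" "p = g i" "q = g j" unfolding Rg_def by auto
  have "i < j"
  proof (rule ccontr)
    assume "\<not> i < j"
    then have "j < i \<or> j = i" by auto
    then have "g j \<le> g i" using g ij unfolding emb_def by (metis less_imp_le order_refl)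
    then show False using \<open>p < q\<close> ij by simp
  qed
  then have "a!i < a!j" using asort ij by simp
  then show "b!p < b!q" using g ij unfolding emb_def by auto
qed

lemma Pset_emb:
  assumes "Pset E"
  shows "\<exists>g. emb a b g \<and> Rg g = E"
proof -
  define L where "L = sorted_list_of_set E"
  have fE: "finite E" using assms unfolding Pset_def by (auto intro: finite_subset[of _ "{..<n}"])
  have sw: "sorted_wrt (<) L" unfolding L_def by (rule strict_sorted_list_of_set)
  have len: "length L = m" unfolding L_def using assms unfolding Pset_def by simp
  have st: "set L = E" unfolding L_def using fE by simp
  have Lmem: "\<And>i. i < m \<Longrightarrow> L!i \<in> E"
  proof -
    fix i assume "i < m" then have "L!i \<in> set L" using len by simp
    then show "L!i \<in> E" using st by simp
  qed
  have En: "E \<subseteq> {..<n}" using assms unfolding Pset_def by simp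
  have Ln: "\<And>i. i < m \<Longrightarrow> L!i < n" using Lmem En by auto
  have Lm: "\<And>i j. i < j \<Longrightarrow> j < m \<Longrightarrow> L!i < L!j" using sw len by (simp add: sorted_wrt_iff_nth_less)
  have Lv: "\<And>i j. i < j \<Longrightarrow> j < m \<Longrightarrow> b!(L!i) < b!(L!j)"
  proof -
    fix i j assume ij: "i < j" "j < m"
    have "L!i \<in> E" "L!j \<in> E" using ij Lmem by auto
    then show "b!(L!i) < b!(L!j)" using Lm[OF ij] assms unfolding Pset_def by blast
  qed
  have "emb a b (nth L)" unfolding emb_def
  proof (intro conjI allI impI)
    fix i j assume ij: "i < m" "j < m"
    show "(a!i < a!j) = (b!(L!i) < b!(L!j))"
    proof (cases "i < j")
      case True then show ?thesis using asort ij Lv by simp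
    next
      case False
      then have "j < i \<or> j = i" by auto
      then have "\<not> b!(L!i) < b!(L!j)" using Lv[of j i] ij by auto
      then show ?thesis using asort ij False by simp
    qed
  next
    fix i assume "i < m" then show "L!i < n" using Ln by simp
  next
    fix i j assume "i < j" "j < m" then show "L!i < L!j" using Lm by simp
  qed
  moreover have "Rg (nth L) = E" unfolding Rg_def using st len by (auto simp: set_conv_nth)
  ultimately show ?thesis by blast
qed

lemma Pset_R:
  assumes "Pset E" "i < n" "j < n" "i \<notin> E" "j \<notin> E"
  shows "(i,j) \<in> R"
  using Pset_emb[OF assms(1)] R_I assms by metis

lemma card_compl: "E \<subseteq> {..<n} \<Longrightarrow> card ({..<n} - E) = n - card E"
  by (simp add: card_Diff_subset finite_subset)

lemma caseA:
  assumes "Pset E0" "E0 \<inter> X t = {}" "card (X t) < n - m" "p < n" "q < n"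
  shows "(p,q) \<in> R\<^sup>*"
proof -
  define F0 where "F0 = {..<n} - E0"
  have E0n: "E0 \<subseteq> {..<n}" "card E0 = m" using assms unfolding Pset_def by auto
  have cF: "card F0 = n - m" unfolding F0_def using card_compl E0n by simp
  have XF: "X t \<subseteq> F0" unfolding F0_def using X_sub assms by auto
  have "\<not> F0 \<subseteq> X t" using cF assms(3) X_sub
    by (metis card_mono finite_lessThan finite_subset not_less)
  then obtain y where y: "y \<in> F0" "y \<notin> X t" by auto
  have main: "\<And>p. p < n \<Longrightarrow> \<exists>z. z \<in> F0 \<and> (z,p) \<in> R"
  proof -
    fix p assume pn: "p < n"
    show "\<exists>z. z \<in> F0 \<and> (z,p) \<in> R"
    proof (cases "p \<in> E0")
      case False
      then have "p \<in> F0" using pn F0_def by auto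
      then show ?thesis using Pset_R[OF assms(1) pn pn False False] by blast
    next
      case True
      define E' where "E' = insert y (E0 - {p})"
      have yE: "y \<notin> E0" "y < n" using y F0_def by auto
      have E'n: "E' \<subseteq> {..<n}" using E0n yE unfolding E'_def by auto
      have fE: "finite E0" using E0n finite_subset by blast
      have "card E' = m" unfolding E'_def using yE True E0n fE
        by (simp add: card_insert_if) (metis One_nat_def Suc_pred card_Diff_singleton card_gt_0_iff empty_iff)
      moreover have "E' \<inter> X t = {}" using assms(2) y unfolding E'_def by auto
      ultimately have PE': "Pset E'" using X_Pset E'n by blast
      have "card (F0 - {y}) > 0" using cF len3 y by (simp add: card_Diff_singleton)
      then obtain z where z: "z \<in> F0" "z \<noteq> y" by (metis Diff_iff card_gt_0_iff ex_in_conv insertI1)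
      have "z \<notin> E'" "p \<notin> E'" "z < n" using z F0_def E'_def True yE by auto
      then have "(z,p) \<in> R" using Pset_R[OF PE'] pn by blast
      then show ?thesis using z by blast
    qed
  qed
  obtain zp where zp: "zp \<in> F0" "(zp,p) \<in> R" using main assms by blast
  obtain zq where zq: "zq \<in> F0" "(zq,q) \<in> R" using main assms by blast
  have "(zp,zq) \<in> R" using Pset_R[OF assms(1)] zp zq F0_def by auto
  moreover have "(p,zp) \<in> R" using R_sym zp by blast
  ultimately show ?thesis using zq by (meson rtrancl.rtrancl_into_rtrancl r_into_rtrancl)
qed

end


context score begin

definition "cA s e = card {v. s < v \<and> v \<le> e \<and> A v}"
definition "cB s e = card {v. s < v \<and> v \<le> e \<and> \<not> A v}"

lemma cA_Suc: "s \<le> e \<Longrightarrow> cA s (Suc e) = cA s e + (if A (Suc e) then 1 else 0)"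
proof -
  assume "s \<le> e"
  define S where "S = {v. s < v \<and> v \<le> e \<and> A v}"
  have fS: "finite S" unfolding S_def by (rule finite_subset[of _ "{..e}"]) auto
  have nS: "Suc e \<notin> S" unfolding S_def by auto
  have "{v. s < v \<and> v \<le> Suc e \<and> A v} = (if A (Suc e) then insert (Suc e) S else S)"
    unfolding S_def using \<open>s \<le> e\<close> by (auto simp: le_Suc_eq)
  then show ?thesis unfolding cA_def using fS nS by (simp add: S_def[symmetric])
qed

lemma cB_Suc: "s \<le> e \<Longrightarrow> cB s (Suc e) = cB s e + (if A (Suc e) then 0 else 1)"
proof -
  assume "s \<le> e"
  define S where "S = {v. s < v \<and> v \<le> e \<and> \<not> A v}"
  have fS: "finite S" unfolding S_def by (rule finite_subset[of _ "{..e}"]) auto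
  have nS: "Suc e \<notin> S" unfolding S_def by auto
  have "{v. s < v \<and> v \<le> Suc e \<and> \<not> A v} = (if A (Suc e) then S else insert (Suc e) S)"
    unfolding S_def using \<open>s \<le> e\<close> by (auto simp: le_Suc_eq)
  then show ?thesis unfolding cB_def using fS nS by (simp add: S_def[symmetric])
qed

lemma cA_0[simp]: "cA s s = 0" unfolding cA_def by simp
lemma cB_0[simp]: "cB s s = 0" unfolding cB_def by simp

lemma cAB_sum: "s \<le> e \<Longrightarrow> cA s e + cB s e = e - s"
proof (induction e rule: dec_induct)
  case base then show ?case by simp
next
  case (step e) then show ?case by (simp add: cA_Suc cB_Suc)
qed

lemma cA_split: assumes "s \<le> e" shows "e \<le> f \<Longrightarrow> cA s f = cA s e + cA e f"
proof (induction f rule: dec_induct)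
  case base then show ?case by simp
next
  case (step f) then show ?case using assms by (simp add: cA_Suc)
qed

lemma cB_split: assumes "s \<le> e" shows "e \<le> f \<Longrightarrow> cB s f = cB s e + cB e f"
proof (induction f rule: dec_induct)
  case base then show ?case by simp
next
  case (step f) then show ?case using assms by (simp add: cB_Suc)
qed

lemma cA_ne: "0 < cA s e \<Longrightarrow> \<exists>v. s < v \<and> v \<le> e \<and> A v"
  unfolding cA_def by (metis (mono_tags, lifting) card.empty empty_Collect_eq less_irrefl)

lemma cB_ne: "0 < cB s e \<Longrightarrow> \<exists>v. s < v \<and> v \<le> e \<and> \<not> A v"
  unfolding cB_def by (metis (mono_tags, lifting) card.empty empty_Collect_eq less_irrefl)

lemma pat6:
  assumes "length \<rho> = 6" "length V = 6" "\<forall>v\<in>set V. 1 \<le> v \<and> v \<le> n"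
    "list_all A (take 3 V)" "list_all (\<lambda>v. \<not> A v) (drop 3 V)"
    "sorted_wrt (<) (take 3 V)" "sorted_wrt (<) (drop 3 V)"
    "\<forall>i<6. \<forall>j<6. \<rho>!i < \<rho>!j \<longleftrightarrow> V!i < V!j"
  shows "\<rho> \<preceq> b"
proof -
  define P where "P = map pos V"
  have Vi: "\<And>i. i < 6 \<Longrightarrow> 1 \<le> V!i \<and> V!i \<le> n"
  proof -
    fix i :: nat assume "i < 6" then have "V!i \<in> set V" using assms(2) by simp
    then show "1 \<le> V!i \<and> V!i \<le> n" using assms(3) by blast
  qed
  have Pi: "\<And>i. i < 6 \<Longrightarrow> P!i < n \<and> b!(P!i) = V!i" using Vi pos_prop assms(2) unfolding P_def by simp
  have Ai: "\<And>i. i < 3 \<Longrightarrow> A (V!i)" using assms(4,2) by (simp add: list_all_length)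
  have Bi: "\<And>i. 3 \<le> i \<Longrightarrow> i < 6 \<Longrightarrow> \<not> A (V!i)"
  proof -
    fix i :: nat assume "3 \<le> i" "i < 6"
    have "\<forall>n<3. \<not> A (V ! (3 + n))" using assms(5,2) by (simp add: list_all_length)
    then have "\<not> A (V ! (3 + (i - 3)))" using \<open>i < 6\<close> by simp
    then show "\<not> A (V!i)" using \<open>3 \<le> i\<close> by simp
  qed
  have s1: "\<And>i j. i < j \<Longrightarrow> j < 3 \<Longrightarrow> V!i < V!j"
    using assms(6,2) by (simp add: sorted_wrt_iff_nth_less)
  have s2: "\<And>i j. 3 \<le> i \<Longrightarrow> i < j \<Longrightarrow> j < 6 \<Longrightarrow> V!i < V!j"
  proof -
    fix i j :: nat assume h: "3 \<le> i" "i < j" "j < 6"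
    have "\<forall>i j. i < j \<longrightarrow> j < 3 \<longrightarrow> V ! (3 + i) < V ! (3 + j)" using assms(7,2) by (simp add: sorted_wrt_iff_nth_less)
    moreover have "i - 3 < j - 3" "j - 3 < 3" using h by auto
    ultimately have "V ! (3 + (i-3)) < V ! (3 + (j-3))" by blast
    then show "V!i < V!j" using h by simp
  qed
  have "sorted_wrt (<) P" unfolding sorted_wrt_iff_nth_less
  proof (intro allI impI)
    fix i j assume ij: "i < j" "j < length P"
    then have j6: "j < 6" using assms(2) P_def by simp
    have pk: "\<And>i. i < 6 \<Longrightarrow> (P!i < k \<longleftrightarrow> A (V!i))"
      using Pi unfolding A_def P_def using assms(2) by simp
    show "P!i < P!j"
    proof (cases "j < 3")
      case True
      then show ?thesis using run_mono[of "P!i" "P!j"] Pi pk Ai s1 ij j6 by auto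
    next
      case False
      show ?thesis
      proof (cases "i < 3")
        case True
        have "P!i < k" using pk[of i] Ai[of i] True j6 ij by simp
        moreover have "\<not> P!j < k" using pk[of j] Bi[of j] False j6 by simp
        ultimately show ?thesis by simp
      next
        case False2: False
        then show ?thesis using run_mono[of "P!i" "P!j"] Pi pk Bi s2 ij j6 False by auto
      qed
    qed
  qed
  moreover have "\<forall>p\<in>set P. p < n" using assms(3) pos_prop unfolding P_def by auto
  moreover have "\<forall>i<6. \<forall>j<6. \<rho>!i < \<rho>!j \<longleftrightarrow> b!(P!i) < b!(P!j)"
    using Pi assms(8) by simp
  moreover have "length P = 6" using assms(2) P_def by simp
  ultimately show ?thesis using pat assms(1) by blast
qed

end


context score begin

lemma link:
  assumes allge: "\<And>e. n - m \<le> card (X e)" and t: "t1 < t2" "t2 \<le> n"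
    and c1: "card (X t1) = n - m" and c2: "card (X t2) = n - m" and dj: "X t1 \<inter> X t2 = {}"
  shows "\<exists>e. card (X e) = n - m \<and> X t1 \<inter> X e \<noteq> {} \<and> X e \<inter> X t2 \<noteq> {}"
proof -
  define d where "d = n - m"
  have d3: "3 \<le> d" using len3 d_def by simp
  have D1: "\<And>v. 1 \<le> v \<Longrightarrow> v \<le> t1 \<Longrightarrow> A v"
  proof (rule ccontr)
    fix v assume v: "1 \<le> v" "v \<le> t1" "\<not> A v"
    then have "v \<in> XV t1" "v \<in> XV t2" using t unfolding XV_def by auto
    then show False using pos_X dj by blast
  qed
  have D2: "\<And>v. t2 < v \<Longrightarrow> v \<le> n \<Longrightarrow> \<not> A v"
  proof
    fix v assume v: "t2 < v" "v \<le> n" "A v"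
    then have "v \<in> XV t1" "v \<in> XV t2" using t unfolding XV_def by auto
    then show False using pos_X dj by blast
  qed
  have XVe: "\<And>e. t1 \<le> e \<Longrightarrow> e \<le> t2 \<Longrightarrow>
      XV e = {v. t1 < v \<and> v \<le> e \<and> \<not> A v} \<union> {v. e < v \<and> v \<le> t2 \<and> A v}"
  proof -
    fix e assume e: "t1 \<le> e" "e \<le> t2"
    show "XV e = {v. t1 < v \<and> v \<le> e \<and> \<not> A v} \<union> {v. e < v \<and> v \<le> t2 \<and> A v}"
    proof
      show "XV e \<subseteq> {v. t1 < v \<and> v \<le> e \<and> \<not> A v} \<union> {v. e < v \<and> v \<le> t2 \<and> A v}"
      proof
        fix v assume "v \<in> XV e"
        then have v: "1 \<le> v" "v \<le> n" "(\<not> A v \<and> v \<le> e) \<or> (A v \<and> e < v)" unfolding XV_def by auto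
        show "v \<in> {v. t1 < v \<and> v \<le> e \<and> \<not> A v} \<union> {v. e < v \<and> v \<le> t2 \<and> A v}"
        proof (cases "A v")
          case True
          then have "v \<le> t2" using D2 v by (meson not_le)
          then show ?thesis using v True by auto
        next
          case False
          then have "t1 < v" using D1 v by (meson not_le)
          then show ?thesis using v False by auto
        qed
      qed
      show "{v. t1 < v \<and> v \<le> e \<and> \<not> A v} \<union> {v. e < v \<and> v \<le> t2 \<and> A v} \<subseteq> XV e"
        using e t unfolding XV_def by auto
    qed
  qed
  have cX: "\<And>e. t1 \<le> e \<Longrightarrow> e \<le> t2 \<Longrightarrow> card (X e) = cB t1 e + cA e t2"
  proof -
    fix e assume e: "t1 \<le> e" "e \<le> t2"
    have f1: "finite {v. t1 < v \<and> v \<le> e \<and> \<not> A v}" by (rule finite_subset[of _ "{..e}"]) auto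
    have f2: "finite {v. e < v \<and> v \<le> t2 \<and> A v}" by (rule finite_subset[of _ "{..t2}"]) auto
    have "card (XV e) = cB t1 e + cA e t2"
      unfolding XVe[OF e] cA_def cB_def using f1 f2 by (subst card_Un_disjoint) auto
    then show "card (X e) = cB t1 e + cA e t2" using card_X by simp
  qed
  have dA: "cA t1 t2 = d" using cX[of t1] c1 t d_def by simp
  have dB: "cB t1 t2 = d" using cX[of t2] c2 t d_def by simp
  have sum: "t2 - t1 = 2 * d" using cAB_sum[of t1 t2] dA dB t by simp
  have ge: "\<And>e. t1 \<le> e \<Longrightarrow> e \<le> t2 \<Longrightarrow> cA t1 e \<le> cB t1 e"
  proof -
    fix e assume e: "t1 \<le> e" "e \<le> t2"
    have "d \<le> cB t1 e + cA e t2" using allge[of e] cX[OF e] d_def by simp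
    moreover have "cA t1 t2 = cA t1 e + cA e t2" using cA_split[of t1 e t2] e by blast
    ultimately show "cA t1 e \<le> cB t1 e" using dA by simp
  qed
  show ?thesis
  proof (cases "\<exists>e. t1 < e \<and> e < t2 \<and> cA t1 e = cB t1 e")
    case True
    then obtain e where e: "t1 < e" "e < t2" "cA t1 e = cB t1 e" by blast
    have cXe: "card (X e) = d"
    proof -
      have "card (X e) = cB t1 e + cA e t2" using cX e by simp
      moreover have "cA t1 t2 = cA t1 e + cA e t2" using cA_split[of t1 e t2] e by simp
      ultimately show ?thesis using dA e by simp
    qed
    have s: "cA t1 e + cB t1 e = e - t1" using cAB_sum[of t1 e] e by simp
    have "cA e t2 > 0"
    proof -
      have "cA t1 t2 = cA t1 e + cA e t2" using cA_split[of t1 e t2] e by simp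
      moreover have "cA t1 e < d" using s sum e t by linarith
      ultimately show ?thesis using dA by simp
    qed
    then obtain v where v: "e < v" "v \<le> t2" "A v" using cA_ne by blast
    have "v \<in> XV t1" "v \<in> XV e" using v e t unfolding XV_def by auto
    then have i1: "X t1 \<inter> X e \<noteq> {}" using pos_X by blast
    have "cB t1 e > 0" using s e by simp
    then obtain w where w: "t1 < w" "w \<le> e" "\<not> A w" using cB_ne by blast
    have "w \<in> XV e" "w \<in> XV t2" using w e t unfolding XV_def by auto
    then have i2: "X e \<inter> X t2 \<noteq> {}" using pos_X by blast
    show ?thesis using cXe i1 i2 d_def by blast
  next
    case False
    then have strict: "\<And>e. t1 < e \<Longrightarrow> e < t2 \<Longrightarrow> cA t1 e < cB t1 e"
      using ge by (metis le_less less_imp_le)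
    define s where "s = t1"
    have t2s: "s + 6 \<le> t2" using sum d3 s_def by simp
    have h1: "\<not> A (Suc s)" using strict[of "Suc s"] t2s s_def by (auto simp: cA_Suc cB_Suc split: if_splits)
    have h2: "\<not> A (Suc (Suc s))" using strict[of "Suc (Suc s)"] t2s s_def h1 by (auto simp: cA_Suc cB_Suc split: if_splits)
    have vals: "\<And>v. s < v \<Longrightarrow> v \<le> t2 \<Longrightarrow> 1 \<le> v \<and> v \<le> n" using t by auto
    show ?thesis
    proof (cases "A (Suc (Suc (Suc s)))")
      case False
      have c3: "cA s (Suc (Suc (Suc s))) = 0" using h1 h2 False by (simp add: cA_Suc)
      have "cA s t2 = cA s (Suc (Suc (Suc s))) + cA (Suc (Suc (Suc s))) t2" using cA_split[of s _ t2] t2s by simp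
      then have "3 \<le> cA (Suc (Suc (Suc s))) t2" using c3 dA d3 s_def by simp
      moreover have "finite {v. Suc (Suc (Suc s)) < v \<and> v \<le> t2 \<and> A v}" by (rule finite_subset[of _ "{..t2}"]) auto
      ultimately obtain w1 w2 w3 where w: "w1 \<in> {v. Suc (Suc (Suc s)) < v \<and> v \<le> t2 \<and> A v}"
         "w2 \<in> {v. Suc (Suc (Suc s)) < v \<and> v \<le> t2 \<and> A v}" "w3 \<in> {v. Suc (Suc (Suc s)) < v \<and> v \<le> t2 \<and> A v}"
         "w1 < w2" "w2 < w3" using three_elems unfolding cA_def by blast
      have "[4,5,6,1,2,3] \<preceq> b"
      proof (rule pat6[where V = "[w1, w2, w3, Suc s, Suc (Suc s), Suc (Suc (Suc s))]"])
        show "\<forall>v\<in>set [w1, w2, w3, Suc s, Suc (Suc s), Suc (Suc (Suc s))]. 1 \<le> v \<and> v \<le> n"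
          using w vals t2s by auto
        show "list_all A (take 3 [w1, w2, w3, Suc s, Suc (Suc s), Suc (Suc (Suc s))])" using w by simp
        show "list_all (\<lambda>v. \<not> A v) (drop 3 [w1, w2, w3, Suc s, Suc (Suc s), Suc (Suc (Suc s))])"
          using h1 h2 False by simp
        show "\<forall>i<6. \<forall>j<6. ([4,5,6,1,2,3::nat]!i < [4,5,6,1,2,3]!j) = ([w1, w2, w3, Suc s, Suc (Suc s), Suc (Suc (Suc s))]!i < [w1, w2, w3, Suc s, Suc (Suc s), Suc (Suc (Suc s))]!j)"
          using w unfolding all6 by simp
      qed (use w in auto)
      then show ?thesis using av1 by simp
    next
      case True
      have h4: "\<not> A (Suc (Suc (Suc (Suc s))))" using strict[of "Suc (Suc (Suc (Suc s)))"] t2s s_def h1 h2 True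
        by (auto simp: cA_Suc cB_Suc split: if_splits)
      have c4: "cA s (Suc (Suc (Suc (Suc s)))) = 1" using h1 h2 True h4 by (simp add: cA_Suc)
      have "cA s t2 = cA s (Suc (Suc (Suc (Suc s)))) + cA (Suc (Suc (Suc (Suc s)))) t2" using cA_split[of s _ t2] t2s by simp
      then have "2 \<le> cA (Suc (Suc (Suc (Suc s)))) t2" using c4 dA d3 s_def by simp
      moreover have "finite {v. Suc (Suc (Suc (Suc s))) < v \<and> v \<le> t2 \<and> A v}" by (rule finite_subset[of _ "{..t2}"]) auto
      ultimately obtain w1 w2 where w: "w1 \<in> {v. Suc (Suc (Suc (Suc s))) < v \<and> v \<le> t2 \<and> A v}"
         "w2 \<in> {v. Suc (Suc (Suc (Suc s))) < v \<and> v \<le> t2 \<and> A v}" "w1 < w2"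
        using two_elems unfolding cA_def by blast
      have "[3,5,6,1,2,4] \<preceq> b"
      proof (rule pat6[where V = "[Suc (Suc (Suc s)), w1, w2, Suc s, Suc (Suc s), Suc (Suc (Suc (Suc s)))]"])
        show "\<forall>v\<in>set [Suc (Suc (Suc s)), w1, w2, Suc s, Suc (Suc s), Suc (Suc (Suc (Suc s)))]. 1 \<le> v \<and> v \<le> n"
          using w vals t2s by auto
        show "list_all A (take 3 [Suc (Suc (Suc s)), w1, w2, Suc s, Suc (Suc s), Suc (Suc (Suc (Suc s)))])" using w True by simp
        show "list_all (\<lambda>v. \<not> A v) (drop 3 [Suc (Suc (Suc s)), w1, w2, Suc s, Suc (Suc s), Suc (Suc (Suc (Suc s)))])"
          using h1 h2 h4 by simp
        show "\<forall>i<6. \<forall>j<6. ([3,5,6,1,2,4::nat]!i < [3,5,6,1,2,4]!j) = ([Suc (Suc (Suc s)), w1, w2, Suc s, Suc (Suc s), Suc (Suc (Suc (Suc s)))]!i < [Suc (Suc (Suc s)), w1, w2, Suc s, Suc (Suc s), Suc (Suc (Suc (Suc s)))]!j)"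
          using w unfolding all6 by simp
      qed (use w in auto)
      then show ?thesis using av2 by simp
    qed
  qed
qed

end


context score begin

lemma Rx:
  assumes "card (X e) = n - m" "p \<in> X e" "q \<in> X e"
  shows "(p,q) \<in> R"
proof -
  define E where "E = {..<n} - X e"
  have "card E = m" unfolding E_def using card_compl[OF X_sub] assms len3 by simp
  moreover have "E \<subseteq> {..<n}" "E \<inter> X e = {}" unfolding E_def by auto
  ultimately have "Pset E" using X_Pset by blast
  moreover have "p < n" "q < n" "p \<notin> E" "q \<notin> E" using assms X_sub E_def by auto
  ultimately show ?thesis using Pset_R by blast
qed

lemma chain:
  assumes allge: "\<And>e. n - m \<le> card (X e)" and t: "t1 < t2" "t2 \<le> n"
    and c1: "card (X t1) = n - m" and c2: "card (X t2) = n - m"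
    and p: "p \<in> X t1" and q: "q \<in> X t2"
  shows "(p,q) \<in> R\<^sup>*"
proof (cases "X t1 \<inter> X t2 = {}")
  case False
  then obtain z where "z \<in> X t1" "z \<in> X t2" by blast
  then have "(p,z) \<in> R" "(z,q) \<in> R" using Rx c1 c2 p q by auto
  then show ?thesis by auto
next
  case True
  obtain e where e: "card (X e) = n - m" "X t1 \<inter> X e \<noteq> {}" "X e \<inter> X t2 \<noteq> {}"
    using link[OF allge t c1 c2 True] by blast
  obtain z1 z2 where z: "z1 \<in> X t1" "z1 \<in> X e" "z2 \<in> X e" "z2 \<in> X t2" using e by blast
  have "(p,z1) \<in> R" "(z1,z2) \<in> R" "(z2,q) \<in> R" using Rx c1 c2 e(1) p q z by auto
  then show ?thesis by (meson rtrancl.rtrancl_into_rtrancl r_into_rtrancl)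
qed

lemma sorted_conn:
  assumes g1: "emb a b g1" and g2: "emb a b g2" and ij: "i < n" "j < n" "i \<notin> Rg g1" "j \<notin> Rg g2"
  shows "(i,j) \<in> R\<^sup>*"
proof (cases "\<exists>E t. Pset E \<and> E \<inter> X t = {} \<and> card (X t) < n - m")
  case True
  then show ?thesis using caseA ij by blast
next
  case False
  have allge: "\<And>e. n - m \<le> card (X e)"
  proof (rule ccontr)
    fix e assume "\<not> n - m \<le> card (X e)"
    then have lt: "card (X e) < n - m" by simp
    define C where "C = {..<n} - X e"
    have "card C = n - card (X e)" unfolding C_def using card_compl[OF X_sub] .
    then have "m \<le> card C" using lt by simp
    then obtain E where E: "E \<subseteq> C" "card E = m" using obtain_subset_with_card_n by metis
    then have "E \<subseteq> {..<n}" "E \<inter> X e = {}" unfolding C_def by auto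
    then have "Pset E" using X_Pset E by blast
    then show False using False lt \<open>E \<inter> X e = {}\<close> by blast
  qed
  have fix1: "\<And>g i. emb a b g \<Longrightarrow> i < n \<Longrightarrow> i \<notin> Rg g \<Longrightarrow> \<exists>t. t \<le> n \<and> card (X t) = n - m \<and> i \<in> X t"
  proof -
    fix g i assume g: "emb a b g" and i: "i < n" "i \<notin> Rg g"
    have P: "Pset (Rg g)" using emb_Pset g .
    obtain t where t: "t \<le> n" "Rg g \<inter> X t = {}" using Pset_X[OF P] by blast
    define F where "F = {..<n} - Rg g"
    have cF: "card F = n - m" unfolding F_def using card_compl emb_Rg_sub emb_Rg_card g by simp
    have XF: "X t \<subseteq> F" unfolding F_def using t X_sub by auto
    have "card (X t) \<le> card F" using XF unfolding F_def by (intro card_mono) auto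
    then have "card (X t) = card F" using allge[of t] cF by simp
    then have "X t = F" using XF unfolding F_def by (intro card_subset_eq) auto
    then show "\<exists>t. t \<le> n \<and> card (X t) = n - m \<and> i \<in> X t" using t i cF F_def by auto
  qed
  obtain t1 where t1: "t1 \<le> n" "card (X t1) = n - m" "i \<in> X t1" using fix1 g1 ij by blast
  obtain t2 where t2: "t2 \<le> n" "card (X t2) = n - m" "j \<in> X t2" using fix1 g2 ij by blast
  show ?thesis
  proof (cases "t1 = t2")
    case True
    then show ?thesis using Rx t1 t2 by blast
  next
    case False
    then have "t1 < t2 \<or> t2 < t1" by auto
    then show ?thesis
    proof
      assume "t1 < t2" then show ?thesis using chain[OF allge _ t2(1) t1(2) t2(2) t1(3) t2(3)] by blast
    next
      assume "t2 < t1" then have "(j,i) \<in> R\<^sup>*" using chain[OF allge _ t1(1) t2(2) t1(2) t2(3) t1(3)] by blast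
      then show ?thesis using Rs_sym by blast
    qed
  qed
qed

end

context core begin

lemma nonsorted_cpt:
  assumes "Suc j0 < m" "a!(Suc j0) < a!j0" "emb a b g" "l < m"
  shows "g l < k \<longleftrightarrow> l \<le> j0"
proof -
  have gm: "\<And>i j. i < j \<Longrightarrow> j < m \<Longrightarrow> g i < g j" and gn: "\<And>i. i < m \<Longrightarrow> g i < n"
    using assms(3) unfolding emb_def by auto
  have "b!(g (Suc j0)) < b!(g j0)" using assms unfolding emb_def by auto
  moreover have lt: "g j0 < g (Suc j0)" using gm assms(1) by simp
  ultimately have "\<not> (g (Suc j0) < k \<or> k \<le> g j0)" using inc gn assms(1) by (metis less_asym Suc_lessD)
  then have k: "g j0 < k" "k \<le> g (Suc j0)" by auto
  show ?thesis
  proof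
    assume "g l < k"
    show "l \<le> j0"
    proof (rule ccontr)
      assume "\<not> l \<le> j0"
      then have "Suc j0 \<le> l" by simp
      then have "g (Suc j0) \<le> g l" using gm assms(4) by (metis le_less)
      then show False using k \<open>g l < k\<close> by simp
    qed
  next
    assume "l \<le> j0"
    then have "g l \<le> g j0" using gm assms(1) by (metis le_less Suc_lessD)
    then show "g l < k" using k by simp
  qed
qed

theorem core_conn:
  assumes g1: "emb a b g1" and g2: "emb a b g2" and ij: "i < n" "j < n" "i \<notin> Rg g1" "j \<notin> Rg g2"
  shows "(i,j) \<in> R\<^sup>*"
proof (cases "\<exists>j0. Suc j0 < m \<and> a!(Suc j0) < a!j0")
  case True
  then obtain j0 where j0: "Suc j0 < m" "a!(Suc j0) < a!j0" by blast
  have "cpt g1 g2" unfolding cpt_def using nonsorted_cpt[OF j0] g1 g2 by blast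
  then have "Conn g1 g2" using exch_conn g1 g2 by blast
  then show ?thesis using ij unfolding Conn_def by blast
next
  case False
  then have "score a b k" unfolding score_def score_axioms_def using core_axioms by blast
  then show ?thesis using score.sorted_conn assms by blast
qed

end


context core begin

definition "coat i = std (nths b ({..<n} - {i}))"
definition "dd i j = std (nths b ({..<n} - {i, j}))"

lemma std_props:
  assumes "T \<subseteq> {..<n}"
  shows "is_perm (std (nths b T))" "length (std (nths b T)) = card T" "std (nths b T) \<preceq> b"
  using std_perm db length_nths_sub[OF assms] std_contains by auto

lemma a_le_std:
  assumes "emb a b g" "Rg g \<subseteq> T"
  shows "a \<preceq> std (nths b T)"
  using contains_std_sub emb_order_iso[OF assms(1)] assms(2) unfolding Rg_def by blast

lemma memS: "x \<in> open_interval a b \<longleftrightarrow> is_perm x \<and> a \<preceq> x \<and> x \<preceq> b \<and> x \<noteq> a \<and> x \<noteq> b"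
  unfolding open_interval_def perm_interval_def by auto

lemma dd_S:
  assumes g: "emb a b g" and ij: "i < n" "j < n" "i \<notin> Rg g" "j \<notin> Rg g"
  shows "dd i j \<in> open_interval a b"
proof -
  define T where "T = {..<n} - {i, j}"
  have Tn: "T \<subseteq> {..<n}" unfolding T_def by auto
  have c1: "card T \<le> n - 1"
  proof -
    have "T \<subseteq> {..<n} - {i}" unfolding T_def by auto
    then have "card T \<le> card ({..<n} - {i})" by (intro card_mono) auto
    then show ?thesis using ij by simp
  qed
  have c2: "n - 2 \<le> card T"
  proof -
    have "card ({..<n} - {i, j}) \<ge> card {..<n} - card {i, j}" by (rule diff_card_le_card_Diff) simp
    moreover have "card {i, j} \<le> 2" by (simp add: card_insert_if)
    ultimately show ?thesis unfolding T_def by simp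
  qed
  have "Rg g \<subseteq> T" using emb_Rg_sub g ij unfolding T_def by auto
  then have "a \<preceq> dd i j" using a_le_std g unfolding dd_def T_def by blast
  moreover have "length (dd i j) = card T" "is_perm (dd i j)" "dd i j \<preceq> b"
    using std_props[OF Tn] unfolding dd_def T_def by auto
  ultimately show ?thesis unfolding memS using c1 c2 len3 ij by auto
qed

lemma coat_S:
  assumes g: "emb a b g" and i: "i < n" "i \<notin> Rg g"
  shows "coat i \<in> open_interval a b"
proof -
  define T where "T = {..<n} - {i}"
  have Tn: "T \<subseteq> {..<n}" unfolding T_def by auto
  have cT: "card T = n - 1" unfolding T_def using i by simp
  have "Rg g \<subseteq> T" using emb_Rg_sub g i unfolding T_def by auto
  then have "a \<preceq> coat i" using a_le_std g unfolding coat_def T_def by blast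
  moreover have "length (coat i) = card T" "is_perm (coat i)" "coat i \<preceq> b"
    using std_props[OF Tn] unfolding coat_def T_def by auto
  ultimately show ?thesis unfolding memS using cT len3 i by auto
qed

lemma dd_le: "dd i j \<preceq> coat i" "dd i j \<preceq> coat j"
proof -
  have "order_iso (dd i j) (nths b ({..<n} - {i, j}))" unfolding dd_def using std_iso order_iso_sym by blast
  then show "dd i j \<preceq> coat i" "dd i j \<preceq> coat j" unfolding coat_def
    by (auto intro: contains_std_sub)
qed

lemma R_comp:
  assumes "(i,j) \<in> R"
  shows "(coat i, coat j) \<in> (comparability (open_interval a b))\<^sup>*"
proof -
  obtain g where g: "emb a b g" "i < n" "j < n" "i \<notin> Rg g" "j \<notin> Rg g" using assms unfolding R_def by blast
  have "coat i \<in> open_interval a b" "coat j \<in> open_interval a b" "dd i j \<in> open_interval a b"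
    using coat_S dd_S g by auto
  then have "(coat i, dd i j) \<in> comparability (open_interval a b)" "(dd i j, coat j) \<in> comparability (open_interval a b)"
    using dd_le unfolding comparability_def by auto
  then show ?thesis by (meson rtrancl.rtrancl_into_rtrancl r_into_rtrancl)
qed

lemma Rs_comp:
  assumes "(i,j) \<in> R\<^sup>*"
  shows "(coat i, coat j) \<in> (comparability (open_interval a b))\<^sup>*"
  using assms
proof (induction rule: rtrancl_induct)
  case base then show ?case by simp
next
  case (step y z) then show ?case using R_comp by (meson rtrancl_trans)
qed

lemma elem_coat:
  assumes x: "x \<in> open_interval a b"
  shows "\<exists>i g. emb a b g \<and> i < n \<and> i \<notin> Rg g \<and> (x, coat i) \<in> comparability (open_interval a b)"
proof -
  have px: "is_perm x" "a \<preceq> x" "x \<preceq> b" "x \<noteq> b" using x memS by auto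
  obtain hx where hx: "emb x b hx" using px contains_iff by blast
  obtain ga where ga: "emb a x ga" using px contains_iff by blast
  define H where "H = hx ` {..<length x}"
  have Hn: "H \<subseteq> {..<n}" using hx unfolding H_def emb_def by auto
  have cH: "card H = length x" using emb_card hx H_def by simp
  have ox: "order_iso x (nths b H)" using emb_order_iso hx H_def by simp
  have "card H < n"
  proof (rule ccontr)
    assume "\<not> card H < n"
    then have "card H = n" using Hn by (metis card_lessThan card_mono finite_lessThan le_antisym not_less)
    then have "H = {..<n}" using Hn by (intro card_subset_eq) auto
    then have "nths b H = b" by simp
    then have "x = b" using perm_iso_eq px pb ox by simp
    then show False using px by simp
  qed
  then obtain i where i: "i < n" "i \<notin> H" using exists_outside Hn by blast
  define g where "g = hx \<circ> ga"
  have g: "emb a b g" using emb_comp ga hx g_def by blast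
  have "Rg g \<subseteq> H" unfolding Rg_def g_def H_def using ga unfolding emb_def by auto
  then have ig: "i \<notin> Rg g" using i by auto
  have "H \<subseteq> {..<n} - {i}" using Hn i by auto
  then have "x \<preceq> coat i" unfolding coat_def using contains_std_sub ox by blast
  moreover have "coat i \<in> open_interval a b" using coat_S g i ig by blast
  ultimately have "(x, coat i) \<in> comparability (open_interval a b)" using x unfolding comparability_def by auto
  then show ?thesis using g i ig by blast
qed

theorem interval_connected: "poset_connected (open_interval a b)"
  unfolding poset_connected_def
proof (intro ballI)
  fix x y assume x: "x \<in> open_interval a b" and y: "y \<in> open_interval a b"
  obtain i g1 where i: "emb a b g1" "i < n" "i \<notin> Rg g1" "(x, coat i) \<in> comparability (open_interval a b)"
    using elem_coat x by blast
  obtain j g2 where j: "emb a b g2" "j < n" "j \<notin> Rg g2" "(y, coat j) \<in> comparability (open_interval a b)"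
    using elem_coat y by blast
  have "(coat j, y) \<in> comparability (open_interval a b)" using j(4) unfolding comparability_def by auto
  moreover have "(coat i, coat j) \<in> (comparability (open_interval a b))\<^sup>*"
    using Rs_comp core_conn i j by blast
  ultimately show "(x,y) \<in> (comparability (open_interval a b))\<^sup>*" using i(4)
    by (meson converse_rtrancl_into_rtrancl rtrancl.rtrancl_into_rtrancl)
qed

end

lemma one_desc:
  assumes h: "emb b p h" and c: "card (descents p) = 1"
    and r: "r \<in> descents b" and r': "r' \<in> descents b"
  shows "r = r'"
proof (rule ccontr)
  have hm: "\<And>i j. i < j \<Longrightarrow> j < length b \<Longrightarrow> h i < h j" and hn: "\<And>i. i < length b \<Longrightarrow> h i < length p"
    and hv: "\<And>i j. i < length b \<Longrightarrow> j < length b \<Longrightarrow> b!i < b!j \<longleftrightarrow> p!(h i) < p!(h j)"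
    using h unfolding emb_def by auto
  have pd: "\<And>r. r \<in> descents b \<Longrightarrow> \<exists>\<rho>. \<rho> \<in> descents p \<and> h r \<le> \<rho> \<and> \<rho> < h (Suc r)"
  proof -
    fix r assume "r \<in> descents b"
    then have r: "Suc r < length b" "b!(Suc r) < b!r" unfolding descents_def by auto
    then have "p!(h (Suc r)) < p!(h r)" using hv by simp
    moreover have "h r < h (Suc r)" "h (Suc r) < length p" using hm hn r by auto
    ultimately obtain \<rho> where "h r \<le> \<rho>" "\<rho> < h (Suc r)" "p!\<rho> > p!(Suc \<rho>)"
      using desc_between by blast
    moreover then have "Suc \<rho> < length p" using \<open>h (Suc r) < length p\<close> by simp
    ultimately show "\<exists>\<rho>. \<rho> \<in> descents p \<and> h r \<le> \<rho> \<and> \<rho> < h (Suc r)" unfolding descents_def by auto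
  qed
  assume ne: "r \<noteq> r'"
  have gen: "\<And>r r'. r \<in> descents b \<Longrightarrow> r' \<in> descents b \<Longrightarrow> r < r' \<Longrightarrow> False"
  proof -
    fix r r' assume rr: "r \<in> descents b" "r' \<in> descents b" "r < r'"
    obtain \<rho> where \<rho>: "\<rho> \<in> descents p" "\<rho> < h (Suc r)" using pd rr by blast
    obtain \<rho>' where \<rho>': "\<rho>' \<in> descents p" "h r' \<le> \<rho>'" using pd rr by blast
    have "Suc r' < length b" using rr unfolding descents_def by auto
    then have "h (Suc r) \<le> h r'" using hm rr by (metis Suc_lessD le_less Suc_leI)
    then have "\<rho> \<noteq> \<rho>'" using \<rho> \<rho>' by simp
    moreover obtain z where "descents p = {z}" using c card_1_singletonE by blast
    ultimately show False using \<rho> \<rho>' by simp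
  qed
  show False using gen[OF r r'] gen[OF r' r] ne by (metis nat_neq_iff)
qed

lemma two_runs:
  assumes pb: "is_perm b" and one: "\<And>r r'. r \<in> descents b \<Longrightarrow> r' \<in> descents b \<Longrightarrow> r = r'"
  shows "\<exists>k \<le> length b. \<forall>p q. p < q \<longrightarrow> q < length b \<longrightarrow> (q < k \<or> k \<le> p) \<longrightarrow> b!p < b!q"
proof -
  have db: "distinct b" using pb is_perm_def by auto
  show ?thesis
  proof (cases "descents b = {}")
    case True
    have "\<forall>p q. p < q \<longrightarrow> q < length b \<longrightarrow> b!p < b!q"
    proof (intro allI impI)
      fix p q assume pq: "p < q" "q < length b"
      show "b!p < b!q"
      proof (rule ccontr)
        assume "\<not> b!p < b!q"
        moreover have "b!p \<noteq> b!q" using db pq by (simp add: nth_eq_iff_index_eq)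
        ultimately have "b!p > b!q" by simp
        then obtain r where "p \<le> r" "r < q" "b!r > b!(Suc r)" using desc_between pq by blast
        then have "r \<in> descents b" using pq unfolding descents_def by auto
        then show False using True by simp
      qed
    qed
    then show ?thesis by blast
  next
    case False
    then obtain r0 where r0: "r0 \<in> descents b" by blast
    have "Suc r0 \<le> length b" using r0 unfolding descents_def by auto
    moreover have "\<forall>p q. p < q \<longrightarrow> q < length b \<longrightarrow> (q < Suc r0 \<or> Suc r0 \<le> p) \<longrightarrow> b!p < b!q"
    proof (intro allI impI)
      fix p q assume pq: "p < q" "q < length b" "q < Suc r0 \<or> Suc r0 \<le> p"
      show "b!p < b!q"
      proof (rule ccontr)
        assume "\<not> b!p < b!q"
        moreover have "b!p \<noteq> b!q" using db pq by (simp add: nth_eq_iff_index_eq)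
        ultimately have "b!p > b!q" by simp
        then obtain r where "p \<le> r" "r < q" "b!r > b!(Suc r)" using desc_between pq by blast
        moreover then have "r \<in> descents b" using pq unfolding descents_def by auto
        then have "r = r0" using one r0 by blast
        ultimately show False using pq by auto
      qed
    qed
    ultimately show ?thesis by blast
  qed
qed

theorem mainTheorem14:
  fixes pi :: "nat list"
  assumes "is_perm pi"
    and "card (descents pi) = 1"
    and "avoids pi [4,5,6,1,2,3]"
    and "avoids pi [3,5,6,1,2,4]"
  shows "\<forall>a b. a \<in> perm_interval [1] pi \<and> b \<in> perm_interval [1] pi \<and> a \<preceq> b
           \<and> length b \<ge> length a + 3 \<longrightarrow> poset_connected (open_interval a b)"
proof (intro allI impI)
  fix a b assume h: "a \<in> perm_interval [1] pi \<and> b \<in> perm_interval [1] pi \<and> a \<preceq> b \<and> length b \<ge> length a + 3"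
  have pa: "is_perm a" and pb: "is_perm b" and bpi: "b \<preceq> pi" and l3: "length a + 3 \<le> length b"
    using h unfolding perm_interval_def by auto
  obtain hb where hb: "emb b pi hb" using bpi contains_iff by blast
  have one: "\<And>r r'. r \<in> descents b \<Longrightarrow> r' \<in> descents b \<Longrightarrow> r = r'"
    using one_desc[OF hb assms(2)] by blast
  obtain k where k: "k \<le> length b" "\<forall>p q. p < q \<longrightarrow> q < length b \<longrightarrow> (q < k \<or> k \<le> p) \<longrightarrow> b!p < b!q"
    using two_runs[OF pb one] by blast
  have av1: "\<not> [4,5,6,1,2,3] \<preceq> b" using assms(3) bpi contains_trans unfolding avoids_def by blast
  have av2: "\<not> [3,5,6,1,2,4] \<preceq> b" using assms(4) bpi contains_trans unfolding avoids_def by blast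
  have "core a b k" unfolding core_def using pa pb k l3 av1 av2 by blast
  then show "poset_connected (open_interval a b)" using core.interval_connected by blast
qed


end
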